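(* Let $K\ge 1$ be an integer, $\mathcal{I}=\{1,\dots,K\}$, and let $\lambda_i>0$, $\gamma_{ui}>0$, $\gamma_{di}>0$ ($i\in\mathcal{I}$), $\gamma_u>0$, $\gamma_d>0$ be given, together with asset proportions $m_i>0$ ($i\in\mathcal{I}$) satisfying $\sum_{i\in\mathcal{I}} m_i<1$. Let $E=\{(h,n),(l,n)\}\cup\{(hi,o),(li,o): i\in\mathcal{I}\}$. Then there exists a unique function $\mu:E\to[0,\infty)$ (a steady state of the non-segmented market) satisfying \[0=-\mu(h,n)\sum_{i\in\mathcal{I}}\lambda_i\mu(li,o)+\gamma_u\mu(l,n)-\gamma_d\mu(h,n),\] \[0=-\lambda_i\mu(h,n)\mu(li,o)-\gamma_{ui}\mu(li,o)+\gamma_{di}\mu(hi,o)\quad\text{for all } i\in\mathcal{I},\] together with the constraints \[\mu(hi,o)+\mu(li,o)=m_i\ \ (i\in\mathcal{I}),\qquad \sum_{i\in\mathcal{I}}m_i+\mu(h,n)+\mu(l,n)=1.\]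
   Context: This is the stationary version of the non-segmented over-the-counter market model: $\mu(z)$ is the proportion of investors in state $z\in E$, where $(h,n)$/$(l,n)$ denote high/low liquidity-type investors owning no asset and $(hi,o)$/$(li,o)$ denote high/low-type investors owning asset $i$. The time-dependent dynamics are $\dot\mu_t(h,n)=-\mu_t(h,n)\sum_i\lambda_i\mu_t(li,o)+\gamma_u\mu_t(l,n)-\gamma_d\mu_t(h,n)$ and $\dot\mu_t(li,o)=-\lambda_i\mu_t(h,n)\mu_t(li,o)-\gamma_{ui}\mu_t(li,o)+\gamma_{di}\mu_t(hi,o)$ under the stated constraints; a steady state is a solution with zero time derivative. *)

theory Defs
  imports "HOL-Analysis.Analysis" "HOL-Library.FuncSet"
begin

datatype state = HN | LN | HO nat | LO nat

definition states :: "nat \<Rightarrow> state set" where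
  "states K = {HN, LN} \<union> HO ` {1..K} \<union> LO ` {1..K}"

definition steady_state ::
  "nat \<Rightarrow> (nat \<Rightarrow> real) \<Rightarrow> (nat \<Rightarrow> real) \<Rightarrow> (nat \<Rightarrow> real) \<Rightarrow> real \<Rightarrow> real
   \<Rightarrow> (nat \<Rightarrow> real) \<Rightarrow> (state \<Rightarrow> real) \<Rightarrow> bool" where
  "steady_state K lam gu_i gd_i gu gd m \<mu> \<longleftrightarrow>
     \<mu> \<in> extensional (states K) \<and>
     (\<forall>z\<in>states K. 0 \<le> \<mu> z) \<and>
     0 = - \<mu> HN * (\<Sum>i\<in>{1..K}. lam i * \<mu> (LO i)) + gu * \<mu> LN - gd * \<mu> HN \<and>
     (\<forall>i\<in>{1..K}. 0 = - lam i * \<mu> HN * \<mu> (LO i) - gu_i i * \<mu> (LO i) + gd_i i * \<mu> (HO i)) \<and>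
     (\<forall>i\<in>{1..K}. \<mu> (HO i) + \<mu> (LO i) = m i) \<and>
     (\<Sum>i\<in>{1..K}. m i) + \<mu> HN + \<mu> LN = 1"

end

theory Submission
  imports Defs
begin

lemma states_mem[simp]:
  "HN \<in> states K" "LN \<in> states K" "HO i \<in> states K \<longleftrightarrow> i \<in> {1..K}" "LO i \<in> states K \<longleftrightarrow> i \<in> {1..K}"
  by (auto simp: states_def)

lemma frac_mono: fixes a b c :: real
  assumes "0 \<le> a" "a \<le> b" "c > 0" shows "a / (a + c) \<le> b / (b + c)"
proof -
  have "a * (b + c) \<le> b * (a + c)" using assms by (simp add: algebra_simps mult_right_mono)
  thus ?thesis using assms by (simp add: divide_simps)
qed

theorem proposition1:
  fixes K :: nat and lam gu_i gd_i m :: "nat \<Rightarrow> real" and gu gd :: real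
  assumes "K \<ge> 1"
    and "\<forall>i\<in>{1..K}. lam i > 0 \<and> gu_i i > 0 \<and> gd_i i > 0 \<and> m i > 0"
    and "gu > 0" and "gd > 0"
    and "(\<Sum>i\<in>{1..K}. m i) < 1"
  shows "\<exists>!\<mu>. steady_state K lam gu_i gd_i gu gd m \<mu>"
proof -
  note pos = assms(2)
  define S where "S = (\<Sum>i\<in>{1..K}. m i)"
  define X where "X y i = gd_i i * m i / (lam i * y + (gu_i i + gd_i i))" for y i
  define F where "F y = (\<Sum>i\<in>{1..K}. gd_i i * m i * (lam i * y / (lam i * y + (gu_i i + gd_i i))))
                    + (gd + gu) * y - gu * (1 - S)" for y
  have den: "lam i * y + (gu_i i + gd_i i) > 0" if "i \<in> {1..K}" "y \<ge> 0" for i y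
    using pos that by (smt (verit) mult_nonneg_nonneg)
  have Xnn: "0 \<le> X y i" if "i \<in> {1..K}" "y \<ge> 0" for i y
    using den[OF that] pos that unfolding X_def by (smt (verit) divide_nonneg_pos mult_nonneg_nonneg)
  have Xle: "X y i \<le> m i" if "i \<in> {1..K}" "y \<ge> 0" for i y
  proof -
    have "gd_i i * m i \<le> m i * (lam i * y + (gu_i i + gd_i i))"
      using pos that by (smt (verit) mult_nonneg_nonneg distrib_left mult.commute)
    thus ?thesis using den[OF that] unfolding X_def by (simp add: divide_simps)
  qed
  have Fterm: "y * (\<Sum>i\<in>{1..K}. lam i * X y i) + gd * y - gu * (1 - S - y) = F y" if "y \<ge> 0" for y
  proof -
    have "y * (\<Sum>i\<in>{1..K}. lam i * X y i) = (\<Sum>i\<in>{1..K}. gd_i i * m i * (lam i * y / (lam i * y + (gu_i i + gd_i i))))"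
      unfolding sum_distrib_left X_def by (rule sum.cong) (auto simp: field_simps)
    thus ?thesis unfolding F_def by (simp add: algebra_simps)
  qed
  have Fmono: "F a < F b" if "0 \<le> a" "a < b" for a b
  proof -
    have "(\<Sum>i\<in>{1..K}. gd_i i * m i * (lam i * a / (lam i * a + (gu_i i + gd_i i))))
        \<le> (\<Sum>i\<in>{1..K}. gd_i i * m i * (lam i * b / (lam i * b + (gu_i i + gd_i i))))"
    proof (rule sum_mono)
      fix i assume i: "i \<in> {1..K}"
      have "lam i * a / (lam i * a + (gu_i i + gd_i i)) \<le> lam i * b / (lam i * b + (gu_i i + gd_i i))"
      proof (rule frac_mono)
        have li: "lam i > 0" "gu_i i > 0" "gd_i i > 0" using pos i by auto
        show "0 \<le> lam i * a" using li that by simp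
        show "lam i * a \<le> lam i * b" using li that by simp
        show "0 < gu_i i + gd_i i" using li by simp
      qed
      thus "gd_i i * m i * (lam i * a / (lam i * a + (gu_i i + gd_i i)))
          \<le> gd_i i * m i * (lam i * b / (lam i * b + (gu_i i + gd_i i)))"
        using pos i by (intro mult_left_mono) (auto intro!: mult_nonneg_nonneg less_imp_le)
    qed
    moreover have "(gd + gu) * a < (gd + gu) * b" using that assms by simp
    ultimately show ?thesis unfolding F_def by linarith
  qed
  have S1: "S < 1" using assms(5) S_def by simp
  have cont: "continuous_on {0..1-S} F"
    unfolding F_def
    apply (intro continuous_intros)
    using den by (auto simp: less_imp_neq[symmetric] dest: den)
  have F0: "F 0 \<le> 0" using S1 assms unfolding F_def by simp
  have F1: "0 \<le> F (1 - S)"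
  proof -
    have "0 \<le> (\<Sum>i\<in>{1..K}. lam i * X (1 - S) i)"
    proof (rule sum_nonneg)
      fix i assume i: "i \<in> {1..K}"
      have "0 \<le> lam i" using pos i by (simp add: less_imp_le)
      moreover have "0 \<le> X (1 - S) i" using Xnn[OF i] S1 by simp
      ultimately show "0 \<le> lam i * X (1 - S) i" by simp
    qed
    hence "0 \<le> (1 - S) * (\<Sum>i\<in>{1..K}. lam i * X (1 - S) i)" using S1 by simp
    moreover have "0 \<le> gd * (1 - S)" using S1 assms by simp
    ultimately show ?thesis using Fterm[of "1-S"] S1 by simp
  qed
  obtain y where y: "0 \<le> y" "y \<le> 1 - S" "F y = 0"
    using IVT'[of F 0 0 "1-S", OF F0 F1 _ cont] S1 by auto
  have char: "F (\<mu> HN) = 0 \<and> 0 \<le> \<mu> HN \<and> \<mu> LN = 1 - S - \<mu> HN \<and>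
      (\<forall>i\<in>{1..K}. \<mu> (LO i) = X (\<mu> HN) i \<and> \<mu> (HO i) = m i - X (\<mu> HN) i)"
    if ss: "steady_state K lam gu_i gd_i gu gd m \<mu>" for \<mu>
  proof -
    note d = ss[unfolded steady_state_def]
    have h0: "0 \<le> \<mu> HN" using d by auto
    have ln: "\<mu> LN = 1 - S - \<mu> HN" using d S_def by auto
    have lo: "\<mu> (LO i) = X (\<mu> HN) i \<and> \<mu> (HO i) = m i - X (\<mu> HN) i" if i: "i \<in> {1..K}" for i
    proof -
      have "\<mu> (HO i) + \<mu> (LO i) = m i" using d i by blast
      hence ho: "\<mu> (HO i) = m i - \<mu> (LO i)" by simp
      have e: "0 = - lam i * \<mu> HN * \<mu> (LO i) - gu_i i * \<mu> (LO i) + gd_i i * \<mu> (HO i)" using d i by blast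
      have "\<mu> (LO i) * (lam i * \<mu> HN + (gu_i i + gd_i i)) = gd_i i * m i"
        using e ho by (simp add: algebra_simps)
      hence "\<mu> (LO i) = X (\<mu> HN) i" using den[OF i h0] unfolding X_def by (simp add: field_simps)
      thus ?thesis using ho by simp
    qed
    have "\<mu> HN * (\<Sum>i\<in>{1..K}. lam i * \<mu> (LO i)) = \<mu> HN * (\<Sum>i\<in>{1..K}. lam i * X (\<mu> HN) i)"
      using lo by (intro arg_cong[where f="\<lambda>t. \<mu> HN * t"] sum.cong) auto
    moreover have "0 = - \<mu> HN * (\<Sum>i\<in>{1..K}. lam i * \<mu> (LO i)) + gu * \<mu> LN - gd * \<mu> HN"
      using d by blast
    moreover have "F (\<mu> HN) = \<mu> HN * (\<Sum>i\<in>{1..K}. lam i * X (\<mu> HN) i) + gd * \<mu> HN - gu * \<mu> LN"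
      using Fterm[OF h0] ln by simp
    ultimately have "F (\<mu> HN) = 0" by linarith
    thus ?thesis using h0 ln lo by blast
  qed
  define \<mu> where "\<mu> = restrict (\<lambda>z. case z of HN \<Rightarrow> y | LN \<Rightarrow> 1 - S - y | HO i \<Rightarrow> m i - X y i | LO i \<Rightarrow> X y i) (states K)"
  have ex: "steady_state K lam gu_i gd_i gu gd m \<mu>"
  proof -
    have sumeq: "(\<Sum>i\<in>{1..K}. lam i * \<mu> (LO i)) = (\<Sum>i\<in>{1..K}. lam i * X y i)"
      by (rule sum.cong) (auto simp: \<mu>_def)
    have nn: "\<forall>z\<in>states K. 0 \<le> \<mu> z"
    proof
      fix z assume z: "z \<in> states K"
      show "0 \<le> \<mu> z" using z y Xnn Xle by (cases z) (auto simp: \<mu>_def)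
    qed
    have eq1: "0 = - \<mu> HN * (\<Sum>i\<in>{1..K}. lam i * \<mu> (LO i)) + gu * \<mu> LN - gd * \<mu> HN"
      using Fterm[OF y(1)] y(3) sumeq by (simp add: \<mu>_def algebra_simps)
    have eq2: "\<forall>i\<in>{1..K}. 0 = - lam i * \<mu> HN * \<mu> (LO i) - gu_i i * \<mu> (LO i) + gd_i i * \<mu> (HO i)"
    proof
      fix i assume i: "i \<in> {1..K}"
      have "X y i * (lam i * y + (gu_i i + gd_i i)) = gd_i i * m i"
        using den[OF i y(1)] unfolding X_def by simp
      thus "0 = - lam i * \<mu> HN * \<mu> (LO i) - gu_i i * \<mu> (LO i) + gd_i i * \<mu> (HO i)"
        using i by (simp add: \<mu>_def algebra_simps)
    qed
    show ?thesis unfolding steady_state_def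
      using nn eq1 eq2 by (auto simp: \<mu>_def S_def)
  qed
  show ?thesis
  proof (rule ex1I[of "steady_state K lam gu_i gd_i gu gd m" \<mu>, OF ex])
    fix \<nu> assume nu: "steady_state K lam gu_i gd_i gu gd m \<nu>"
    note c1 = char[OF nu] and c2 = char[OF ex]
    have "\<nu> HN = \<mu> HN"
    proof (rule ccontr)
      assume "\<nu> HN \<noteq> \<mu> HN"
      hence disj: "\<nu> HN < \<mu> HN \<or> \<mu> HN < \<nu> HN" by linarith
      have "F (\<nu> HN) = 0" "F (\<mu> HN) = 0" "0 \<le> \<nu> HN" "0 \<le> \<mu> HN" using c1 c2 by blast+
      from disj show False
      proof
        assume "\<nu> HN < \<mu> HN"
        from Fmono[OF \<open>0 \<le> \<nu> HN\<close> this] show False using \<open>F (\<nu> HN) = 0\<close> \<open>F (\<mu> HN) = 0\<close> by simp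
      next
        assume "\<mu> HN < \<nu> HN"
        from Fmono[OF \<open>0 \<le> \<mu> HN\<close> this] show False using \<open>F (\<nu> HN) = 0\<close> \<open>F (\<mu> HN) = 0\<close> by simp
      qed
    qed
    note hn = this
    have n1: "\<nu> LN = 1 - S - \<nu> HN" using c1 by (elim conjE)
    have n2: "\<forall>i\<in>{1..K}. \<nu> (LO i) = X (\<nu> HN) i \<and> \<nu> (HO i) = m i - X (\<nu> HN) i"
      using c1 by (elim conjE)
    have m1: "\<mu> LN = 1 - S - \<mu> HN" using c2 by (elim conjE)
    have m2: "\<forall>i\<in>{1..K}. \<mu> (LO i) = X (\<mu> HN) i \<and> \<mu> (HO i) = m i - X (\<mu> HN) i"
      using c2 by (elim conjE)
    have eqs: "\<nu> z = \<mu> z" if z: "z \<in> states K" for z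
    proof (cases z)
      case HN thus ?thesis using hn by simp
    next
      case LN thus ?thesis using hn n1 m1 by simp
    next
      case (HO i) hence i: "i \<in> {1..K}" using z by simp
      have "\<nu> (HO i) = m i - X (\<nu> HN) i" "\<mu> (HO i) = m i - X (\<mu> HN) i"
        using bspec[OF n2 i] bspec[OF m2 i] by auto
      thus ?thesis using HO hn by simp
    next
      case (LO i) hence i: "i \<in> {1..K}" using z by simp
      have "\<nu> (LO i) = X (\<nu> HN) i" "\<mu> (LO i) = X (\<mu> HN) i"
        using bspec[OF n2 i] bspec[OF m2 i] by auto
      thus ?thesis using LO hn by simp
    qed
    have e1: "\<nu> \<in> extensional (states K)" using nu unfolding steady_state_def by blast
    have e2: "\<mu> \<in> extensional (states K)" using ex unfolding steady_state_def by blast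
    show "\<nu> = \<mu>"
    proof
      fix z show "\<nu> z = \<mu> z"
      proof (cases "z \<in> states K")
        case True thus ?thesis by (rule eqs)
      next
        case False thus ?thesis using extensional_arb[OF e1 False] extensional_arb[OF e2 False] by simp
      qed
    qed
  qed
qed

end
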